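(* Let $n\ge2$ and let $A\in M_n(\mathbb C)$ be nonzero. Then $\mathrm{rk}\,A=1$ if and only if there exist $n-1$ smooth elements $A_2,\dots,A_n\in M_n(\mathbb C)$ such that $A\in\bigcap_{i=2}^nA_i^\perp$ and $A$ is left-symmetric relative to $\bigcap_{i=2}^nA_i^\perp$.
   Context: $M_n(\mathbb C)$ carries the operator (spectral) norm. $X\perp Y$ (Birkhoff–James orthogonality) means $\|X+\lambda Y\|\ge\|X\|$ for all $\lambda\in\mathbb C$, and $X^\perp:=\{Y: X\perp Y\}$. $X$ is smooth if there is no $Y$ with $Y^\perp\subsetneq X^\perp$. For a subset $\mathcal S$, an element $X\in\mathcal S$ is left-symmetric relative to $\mathcal S$ if for every $Y\in\mathcal S$, $X\perp Y$ implies $Y\perp X$. *)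

theory Defs
  imports "HOL-Analysis.Analysis"
begin

definition opnorm :: "complex^'n^'n \<Rightarrow> real" where
  "opnorm A = onorm (\<lambda>x. A *v x)"

definition cmscale :: "complex \<Rightarrow> complex^'n^'m \<Rightarrow> complex^'n^'m" where
  "cmscale c Y = (\<chi> i j. c * Y $ i $ j)"

definition bj_orth :: "complex^'n^'n \<Rightarrow> complex^'n^'n \<Rightarrow> bool" where
  "bj_orth X Y \<longleftrightarrow> (\<forall>c::complex. opnorm (X + cmscale c Y) \<ge> opnorm X)"

definition orth_set :: "complex^'n^'n \<Rightarrow> (complex^'n^'n) set" where
  "orth_set X = {Y. bj_orth X Y}"

definition smooth :: "complex^'n^'n \<Rightarrow> bool" where
  "smooth X \<longleftrightarrow> \<not> (\<exists>Y. orth_set Y \<subset> orth_set X)"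

definition left_symmetric_rel :: "(complex^'n^'n) set \<Rightarrow> complex^'n^'n \<Rightarrow> bool" where
  "left_symmetric_rel S X \<longleftrightarrow> X \<in> S \<and> (\<forall>Y\<in>S. bj_orth X Y \<longrightarrow> bj_orth Y X)"

end

theory Submission
  imports Defs
begin


definition hip :: "complex^'n \<Rightarrow> complex^'n \<Rightarrow> complex" where
  "hip x y = (\<Sum>i\<in>UNIV. cnj (x$i) * y$i)"

definition outer :: "complex^'n \<Rightarrow> complex^'n \<Rightarrow> complex^'n^'n" where
  "outer s t = (\<chi> i k. s$i * cnj (t$k))"

definition adj :: "complex^'n^'n \<Rightarrow> complex^'n^'n" where
  "adj A = (\<chi> i k. cnj (A$k$i))"

lemma hip_add_right: "hip x (y + z) = hip x y + hip x z"
  by (simp add: hip_def distrib_left sum.distrib)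
lemma hip_add_left: "hip (x + y) z = hip x z + hip y z"
  by (simp add: hip_def distrib_right sum.distrib)
lemma hip_diff_right: "hip x (y - z) = hip x y - hip x z"
  by (simp add: hip_def right_diff_distrib sum_subtractf)
lemma hip_diff_left: "hip (x - y) z = hip x z - hip y z"
  by (simp add: hip_def left_diff_distrib sum_subtractf)
lemma hip_scale_right: "hip x (c *s y) = c * hip x y"
  by (simp add: hip_def sum_distrib_left mult_ac)
lemma hip_scale_left: "hip (c *s x) y = cnj c * hip x y"
  by (simp add: hip_def sum_distrib_left mult_ac)
lemma hip_zero_right[simp]: "hip x 0 = 0" by (simp add: hip_def)
lemma hip_zero_left[simp]: "hip 0 x = 0" by (simp add: hip_def)
lemma hip_sym: "hip y x = cnj (hip x y)"
  by (simp add: hip_def mult.commute)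
lemma hip_sum_right: "hip x (\<Sum>j\<in>J. f j) = (\<Sum>j\<in>J. hip x (f j))"
  by (induction J rule: infinite_finite_induct) (auto simp: hip_add_right)

lemma norm_sq_vec: "(norm (x::complex^'n))^2 = (\<Sum>i\<in>UNIV. (cmod (x$i))^2)"
  by (simp add: norm_vec_def L2_set_def sum_nonneg)

lemma cnj_mult_self: "cnj z * z = of_real ((cmod z)^2)"
  using complex_norm_square[of z] by (simp add: mult.commute)

lemma hip_self: "hip x x = of_real ((norm x)^2)"
proof -
  have "hip x x = (\<Sum>i\<in>UNIV. of_real ((cmod (x$i))^2))"
    unfolding hip_def by (rule sum.cong) (auto simp: cnj_mult_self)
  also have "\<dots> = of_real (\<Sum>i\<in>UNIV. (cmod (x$i))^2)" by simp
  finally show ?thesis by (simp add: norm_sq_vec)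
qed

lemma Re_hip: "Re (hip x y) = inner x y"
  by (simp add: hip_def inner_vec_def inner_complex_def Re_sum)

lemma norm_cscale: "norm (c *s (x::complex^'n)) = cmod c * norm x"
proof -
  have "(norm (c *s x))^2 = (cmod c * norm x)^2"
    by (simp add: norm_sq_vec power_mult_distrib norm_mult sum_distrib_left)
  then show ?thesis by (simp add: power2_eq_iff_nonneg)
qed

lemma hip_cs: "cmod (hip x y) \<le> norm x * norm y"
proof (cases "hip x y = 0")
  case True then show ?thesis by simp
next
  case False
  let ?h = "hip x y"
  define l where "l = ?h / of_real (cmod ?h)"
  have cl: "cmod l = 1" using False by (simp add: l_def norm_divide)
  have "hip (l *s x) y = of_real (cmod ?h)"
    using False complex_norm_square[of "hip x y"] by (simp add: hip_scale_left l_def power2_eq_square field_simps)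
  then have "cmod ?h = inner (l *s x) y" by (metis Re_hip Re_complex_of_real)
  also have "\<dots> \<le> norm (l *s x) * norm y" by (rule norm_cauchy_schwarz)
  also have "\<dots> = norm x * norm y" by (simp add: norm_cscale cl)
  finally show ?thesis .
qed

lemma norm_add_sq: "(norm (x + y :: complex^'n))^2 = (norm x)^2 + 2 * Re (hip x y) + (norm y)^2"
  by (simp add: Re_hip power2_norm_eq_inner inner_add inner_commute)

lemma mv_add: "(A + B) *v x = A *v x + B *v (x::complex^'n)"
  by (simp add: matrix_vector_mult_add_rdistrib)
lemma mv_cmscale: "cmscale c Y *v x = c *s (Y *v x)"
  by (simp add: cmscale_def matrix_vector_mult_def vector_scalar_mult_def sum_distrib_left mult_ac)
lemma outer_mv: "outer s t *v x = hip t x *s s"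
  by (simp add: outer_def matrix_vector_mult_def vector_scalar_mult_def hip_def sum_distrib_left mult_ac vec_eq_iff)
lemma mv_cscale: "A *v (c *s x) = c *s (A *v (x::complex^'n))"
  by (simp add: matrix_vector_mult_def vector_scalar_mult_def sum_distrib_left mult_ac vec_eq_iff)
lemma mv_diff: "A *v (x - y) = A *v x - A *v (y::complex^'n)"
  by (simp add: matrix_vector_mult_diff_distrib)
lemma adj_hip: "hip x (A *v y) = hip (adj A *v x) y"
proof -
  have "hip x (A *v y) = (\<Sum>i\<in>UNIV. \<Sum>j\<in>UNIV. cnj (x$i) * A$i$j * y$j)"
    by (simp add: hip_def matrix_vector_mult_def sum_distrib_left mult.assoc)
  also have "\<dots> = (\<Sum>j\<in>UNIV. \<Sum>i\<in>UNIV. cnj (x$i) * A$i$j * y$j)" by (rule sum.swap)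
  also have "\<dots> = hip (adj A *v x) y"
    by (simp add: hip_def adj_def matrix_vector_mult_def sum_distrib_left mult_ac)
  finally show ?thesis .
qed
lemma adj_adj[simp]: "adj (adj A) = A" by (simp add: adj_def vec_eq_iff)

lemma bl_mv: "bounded_linear (\<lambda>x. (A::complex^'n^'n) *v x)"
  by (rule matrix_vector_mul_bounded_linear)

lemma opnorm_bound: "norm (A *v x) \<le> opnorm A * norm x"
  unfolding opnorm_def by (rule onorm[OF bl_mv])

lemma opnorm_le: "(\<And>x. norm (A *v x) \<le> b * norm x) \<Longrightarrow> opnorm A \<le> b"
  unfolding opnorm_def by (rule onorm_le)

lemma opnorm_nonneg: "0 \<le> opnorm A"
  unfolding opnorm_def by (rule onorm_pos_le[OF bl_mv])

lemma opnorm_attained: "\<exists>p::complex^'n. norm p = 1 \<and> norm (A *v p) = opnorm A"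
proof -
  have "compact (sphere (0::complex^'n) 1)" by simp
  moreover have "sphere (0::complex^'n) 1 \<noteq> {}" using vector_choose_size[of 1] by (auto simp: sphere_def)
  moreover have "continuous_on (sphere 0 1) (\<lambda>x. norm (A *v x))"
    by (intro continuous_intros linear_continuous_on bounded_linear.linear bl_mv)
  ultimately obtain p where p: "p \<in> sphere 0 1" and mx: "\<forall>y\<in>sphere 0 1. norm (A *v y) \<le> norm (A *v p)"
    using continuous_attains_sup by blast
  have np: "norm p = 1" using p by simp
  have "opnorm A \<le> norm (A *v p)"
  proof (rule opnorm_le)
    fix x :: "complex^'n"
    show "norm (A *v x) \<le> norm (A *v p) * norm x"
    proof (cases "x = 0")
      case True then show ?thesis by simp
    next
      case False
      let ?y = "of_real (1 / norm x) *s x"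
      have "?y \<in> sphere 0 1" using False by (simp add: norm_cscale norm_divide)
      then have "norm (A *v ?y) \<le> norm (A *v p)" using mx by blast
      moreover have "A *v ?y = of_real (1 / norm x) *s (A *v x)"
        by (simp add: mv_cscale)
      ultimately show ?thesis using False by (simp add: norm_cscale norm_divide field_simps)
    qed
  qed
  moreover have "norm (A *v p) \<le> opnorm A" using opnorm_bound[of A p] np by simp
  ultimately show ?thesis using np by force
qed



lemma mv_rdist: "A *v (x + y) = A *v x + A *v (y::complex^'n)"
  by (simp add: matrix_vector_right_distrib)

lemma hip_self_norm: "norm x = 1 \<Longrightarrow> hip x x = 1"
  by (simp add: hip_self)

lemma opnorm_le_unit:
  fixes A :: "complex^'n^'n"
  assumes "\<And>x. norm x = 1 \<Longrightarrow> norm (A *v x) \<le> b" "0 \<le> b"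
  shows "opnorm A \<le> b"
proof (rule opnorm_le)
  fix x :: "complex^'n"
  show "norm (A *v x) \<le> b * norm x"
  proof (cases "x = 0")
    case True then show ?thesis by simp
  next
    case False
    let ?y = "of_real (1 / norm x) *s x"
    have "norm ?y = 1" using False by (simp add: norm_cscale norm_divide)
    then have "norm (A *v ?y) \<le> b" using assms by blast
    moreover have "A *v ?y = of_real (1 / norm x) *s (A *v x)"
      by (simp add: mv_cscale)
    ultimately show ?thesis using False by (simp add: norm_cscale norm_divide field_simps)
  qed
qed

lemma opnorm_outer: "opnorm (outer s t) = norm s * norm t"
proof (rule antisym)
  show "opnorm (outer s t) \<le> norm s * norm t"
  proof (rule opnorm_le)
    fix x
    have "norm (outer s t *v x) = cmod (hip t x) * norm s" by (simp add: outer_mv norm_cscale)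
    also have "\<dots> \<le> (norm t * norm x) * norm s" by (rule mult_right_mono[OF hip_cs]) simp
    finally show "norm (outer s t *v x) \<le> norm s * norm t * norm x" by (simp add: mult_ac)
  qed
next
  have "norm (outer s t *v t) = norm t ^ 2 * norm s"
    by (simp add: outer_mv norm_cscale hip_self norm_power)
  then have "norm t ^ 2 * norm s \<le> opnorm (outer s t) * norm t"
    using opnorm_bound[of "outer s t" t] by simp
  then show "norm s * norm t \<le> opnorm (outer s t)"
    by (cases "t = 0") (auto simp: power2_eq_square mult_ac opnorm_nonneg norm_power)
qed

lemma orth_easy:
  assumes "norm p = 1" "norm (X *v p) = opnorm X" "hip (X *v p) (Z *v p) = 0"
  shows "bj_orth X Z"
  unfolding bj_orth_def
proof
  fix c
  have 1: "norm ((X + cmscale c Z) *v p) \<le> opnorm (X + cmscale c Z)"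
    using opnorm_bound[of _ p] assms(1) by simp
  have 2: "(X + cmscale c Z) *v p = X *v p + c *s (Z *v p)" by (simp add: mv_add mv_cmscale)
  have "(norm (X *v p + c *s (Z *v p)))^2 = (norm (X *v p))^2 + (norm (c *s (Z *v p)))^2"
    by (simp add: norm_add_sq hip_scale_right assms(3))
  then have "(norm (X *v p))^2 \<le> (norm (X *v p + c *s (Z *v p)))^2" by simp
  then have "norm (X *v p) \<le> norm (X *v p + c *s (Z *v p))"
    by (rule power2_le_imp_le) simp
  then show "opnorm X \<le> opnorm (X + cmscale c Z)" using 1 2 assms(2) by simp
qed

lemma real_ineq_H:
  fixes b z u :: real
  assumes "b^2 + z^2 = 1" "0 < u" "u \<le> 1/4"
  and "V \<le> b^2 - 2 * u * b^2 + 2 * P + u / 4"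
  and "2 * P \<le> z^2 / 2 + u * b^2 / 2"
  shows "V \<le> 1 - u"
proof -
  have "b^2 \<le> 1" using assms(1) by (smt (verit) zero_le_power2)
  then have "b^2 * (1/2 - 3*u/2) \<le> 1 * (1/2 - 3*u/2)" using assms(3)
    by (intro mult_right_mono) auto
  then show ?thesis using assms by (simp add: algebra_simps)
qed

lemma outer_unit_decrease:
  fixes Z :: "complex^'n^'n"
  assumes ns: "norm s = 1" and nt: "norm t = 1" and a0: "hip s (Z *v t) \<noteq> 0"
  shows "\<exists>c. opnorm (outer s t + cmscale c Z) < 1"
proof -
  define a where "a = hip s (Z *v t)"
  define K where "K = opnorm Z"
  define e where "e = cmod a"
  have e0: "0 < e" using a0 by (simp add: e_def a_def)
  have eK: "e \<le> K"
  proof -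
    have "e \<le> norm s * norm (Z *v t)" unfolding e_def a_def by (rule hip_cs)
    also have "\<dots> \<le> K" using opnorm_bound[of Z t] ns nt by (simp add: K_def)
    finally show ?thesis .
  qed
  have K0: "0 < K" using e0 eK by linarith
  define eps where "eps = 1 / (4 * K^2)"
  define u where "u = eps * e^2"
  define c where "c = - (of_real eps * cnj a)"
  have eps0: "0 < eps" using K0 by (simp add: eps_def)
  have epsK: "eps * K^2 = 1/4" using K0 by (simp add: eps_def)
  have u0: "0 < u" using eps0 e0 by (simp add: u_def)
  have u4: "u \<le> 1/4"
  proof -
    have "e^2 \<le> K^2" using eK e0 by (intro power_mono) auto
    then have "eps * e^2 \<le> eps * K^2" using eps0 by (intro mult_left_mono) auto
    then show ?thesis using epsK by (simp add: u_def)
  qed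
  have cmod_c: "cmod c = eps * e" using eps0 by (simp add: c_def e_def norm_mult)
  have ca: "c * a = - of_real u"
  proof -
    have "cnj a * a = of_real (e^2)" by (simp add: e_def cnj_mult_self)
    then have "c * a = - (of_real eps * (cnj a * a))" by (simp add: c_def mult_ac)
    also have "\<dots> = - of_real u" using \<open>cnj a * a = of_real (e^2)\<close> by (simp add: u_def)
    finally show ?thesis .
  qed
  have bound: "(norm ((outer s t + cmscale c Z) *v x))^2 \<le> 1 - u" if nx: "norm x = 1" for x :: "complex^'n"
  proof -
    define \<beta> where "\<beta> = hip t x"
    define z where "z = x - \<beta> *s t"
    have htt: "hip t t = 1" using nt by (simp add: hip_self)
    have hz: "hip t z = 0" by (simp add: z_def hip_diff_right hip_scale_right htt \<beta>_def)
    have xz: "x = \<beta> *s t + z" by (simp add: z_def)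
    have "1 = (norm x)^2" using nx by simp
    also have "\<dots> = (cmod \<beta>)^2 + (norm z)^2"
      by (subst xz, simp add: norm_add_sq hip_scale_left hz norm_cscale nt)
    finally have bz: "(cmod \<beta>)^2 + (norm z)^2 = 1" by simp
    define g where "g = hip s (Z *v z)"
    have gb: "cmod g \<le> K * norm z"
    proof -
      have "cmod g \<le> norm s * norm (Z *v z)" unfolding g_def by (rule hip_cs)
      also have "\<dots> \<le> K * norm z" using opnorm_bound[of Z z] ns by (simp add: K_def)
      finally show ?thesis .
    qed
    have Yx: "(outer s t + cmscale c Z) *v x = \<beta> *s s + c *s (Z *v x)"
      by (simp add: mv_add mv_cmscale outer_mv \<beta>_def)
    have hZx: "hip s (Z *v x) = \<beta> * a + g"
      by (subst xz, simp add: mv_rdist mv_cscale hip_add_right hip_scale_right a_def g_def)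
    have cross: "hip (\<beta> *s s) (c *s (Z *v x)) = of_real (- u * (cmod \<beta>)^2) + cnj \<beta> * c * g"
    proof -
      have "hip (\<beta> *s s) (c *s (Z *v x)) = cnj \<beta> * c * (\<beta> * a + g)"
        by (simp add: hip_scale_left hip_scale_right hZx mult_ac)
      also have "\<dots> = (cnj \<beta> * \<beta>) * (c * a) + cnj \<beta> * c * g" by (simp add: algebra_simps)
      also have "\<dots> = of_real (- u * (cmod \<beta>)^2) + cnj \<beta> * c * g"
        by (simp add: ca cnj_mult_self)
      finally show ?thesis .
    qed
    have Rcross: "Re (cnj \<beta> * c * g) \<le> cmod \<beta> * (eps * e) * (K * norm z)"
    proof -
      have "Re (cnj \<beta> * c * g) \<le> cmod (cnj \<beta> * c * g)" by (rule complex_Re_le_cmod)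
      also have "\<dots> = cmod \<beta> * (eps * e) * cmod g" by (simp add: norm_mult cmod_c)
      also have "\<dots> \<le> cmod \<beta> * (eps * e) * (K * norm z)"
        using gb eps0 e0 by (intro mult_left_mono) auto
      finally show ?thesis .
    qed
    have nZx: "norm (Z *v x) \<le> K" using opnorm_bound[of Z x] nx by (simp add: K_def)
    have last: "(norm (c *s (Z *v x)))^2 \<le> u / 4"
    proof -
      have "(norm (c *s (Z *v x)))^2 = (eps * e)^2 * (norm (Z *v x))^2"
        by (simp add: norm_cscale cmod_c power_mult_distrib)
      also have "\<dots> \<le> (eps * e)^2 * K^2"
        using nZx by (intro mult_left_mono power_mono) auto
      also have "\<dots> = u / 4" using epsK by (simp add: u_def power2_eq_square field_simps)
      finally show ?thesis .
    qed
    define P where "P = cmod \<beta> * (eps * e) * (K * norm z)"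
    have V: "(norm ((outer s t + cmscale c Z) *v x))^2 \<le> (cmod \<beta>)^2 - 2 * u * (cmod \<beta>)^2 + 2 * P + u / 4"
    proof -
      have "(norm ((outer s t + cmscale c Z) *v x))^2
          = (cmod \<beta>)^2 + 2 * Re (hip (\<beta> *s s) (c *s (Z *v x))) + (norm (c *s (Z *v x)))^2"
        by (simp add: Yx norm_add_sq norm_cscale ns)
      also have "\<dots> = (cmod \<beta>)^2 - 2 * u * (cmod \<beta>)^2 + 2 * Re (cnj \<beta> * c * g) + (norm (c *s (Z *v x)))^2"
        by (simp add: cross algebra_simps)
      finally show ?thesis using Rcross last unfolding P_def by linarith
    qed
    have PP: "2 * P \<le> (norm z)^2 / 2 + u * (cmod \<beta>)^2 / 2"
    proof -
      define m where "m = eps * e * K"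
      have e1: "P = m * cmod \<beta> * norm z" by (simp add: P_def m_def mult_ac)
      have e2: "(norm z - 2*m*cmod \<beta>)^2 = (norm z)^2 - 4 * (m * cmod \<beta> * norm z) + 4 * m^2 * (cmod \<beta>)^2"
        by (simp add: power2_eq_square algebra_simps)
      have m2: "m^2 = u / 4" using epsK by (simp add: m_def u_def power2_eq_square field_simps)
      have e3: "4 * m^2 * (cmod \<beta>)^2 = u * (cmod \<beta>)^2" using m2 by simp
      have "0 \<le> (norm z - 2*m*cmod \<beta>)^2" by simp
      then show ?thesis using e1 e2 e3 by linarith
    qed
    show ?thesis by (rule real_ineq_H[OF bz u0 u4 V PP])
  qed
  have "opnorm (outer s t + cmscale c Z) \<le> sqrt (1 - u)"
  proof (rule opnorm_le_unit)
    fix x :: "complex^'n" assume "norm x = 1"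
    then have "(norm ((outer s t + cmscale c Z) *v x))^2 \<le> 1 - u" by (rule bound)
    then show "norm ((outer s t + cmscale c Z) *v x) \<le> sqrt (1 - u)"
      by (simp add: real_le_rsqrt)
  qed (use u4 in simp)
  also have "sqrt (1 - u) < 1" using u0 u4 by simp
  finally show ?thesis by blast
qed



lemma mv_mdiff: "(X - Y) *v p = X *v p - Y *v (p::complex^'n)"
  by (simp add: matrix_vector_mult_def vec_eq_iff sum_subtractf algebra_simps)

lemma cmscale_add: "cmscale c (X + Y) = cmscale c X + cmscale c Y"
  by (simp add: cmscale_def vec_eq_iff algebra_simps)
lemma cmscale_cmscale: "cmscale a (cmscale b X) = cmscale (a * b) X"
  by (simp add: cmscale_def vec_eq_iff algebra_simps)
lemma cmscale_one[simp]: "cmscale 1 X = X"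
  by (simp add: cmscale_def vec_eq_iff)

lemma opnorm_cmscale: "opnorm (cmscale c (X::complex^'n^'n)) = cmod c * opnorm X"
proof (rule antisym)
  show "opnorm (cmscale c X) \<le> cmod c * opnorm X"
  proof (rule opnorm_le)
    fix x
    show "norm (cmscale c X *v x) \<le> cmod c * opnorm X * norm x"
      using opnorm_bound[of X x] by (simp add: mv_cmscale norm_cscale mult.assoc mult_left_mono)
  qed
next
  show "cmod c * opnorm X \<le> opnorm (cmscale c X)"
  proof (cases "c = 0")
    case True then show ?thesis using opnorm_nonneg by simp
  next
    case False
    have "opnorm X \<le> opnorm (cmscale c X) / cmod c"
    proof (rule opnorm_le)
      fix x
      have "X *v x = (1 / c) *s (cmscale c X *v x)" using False by (simp add: mv_cmscale vec_eq_iff)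
      then have "norm (X *v x) = norm (cmscale c X *v x) / cmod c" by (simp add: norm_cscale norm_divide)
      also have "\<dots> \<le> opnorm (cmscale c X) * norm x / cmod c"
        using opnorm_bound[of "cmscale c X" x] False by (simp add: divide_right_mono)
      finally show "norm (X *v x) \<le> opnorm (cmscale c X) / cmod c * norm x" by simp
    qed
    then show ?thesis using False by (simp add: field_simps)
  qed
qed

lemma outer_scale: "outer (a *s s) (b *s t) = cmscale (a * cnj b) (outer s t)"
  by (simp add: outer_def cmscale_def vec_eq_iff mult_ac)

lemma unit_of: "x \<noteq> 0 \<Longrightarrow> norm (of_real (1 / norm x) *s (x::complex^'n)) = 1"
  by (simp add: norm_cscale norm_divide)

lemma outer_not_orth:
  fixes Z :: "complex^'n^'n"
  assumes s0: "s \<noteq> 0" and t0: "t \<noteq> 0" and a0: "hip s (Z *v t) \<noteq> 0"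
  shows "\<not> bj_orth (outer s t) Z"
proof
  assume orth: "bj_orth (outer s t) Z"
  define s' where "s' = of_real (1 / norm s) *s s"
  define t' where "t' = of_real (1 / norm t) *s t"
  define r where "r = norm s * norm t"
  have r0: "0 < r" using s0 t0 by (simp add: r_def)
  have "hip s' (Z *v t') = of_real (1 / norm s) * of_real (1 / norm t) * hip s (Z *v t)"
    by (simp add: s'_def t'_def hip_scale_left hip_scale_right mv_cscale)
  then have "hip s' (Z *v t') \<noteq> 0" using s0 t0 a0 by simp
  then obtain c where c: "opnorm (outer s' t' + cmscale c Z) < 1"
    using outer_unit_decrease[of s' t' Z] unit_of[OF s0] unit_of[OF t0] s'_def t'_def by blast
  have st: "outer s t = cmscale (of_real r) (outer s' t')"
  proof -
    have "outer s' t' = cmscale (of_real (1/ norm s) * of_real (1 / norm t)) (outer s t)"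
      by (simp add: s'_def t'_def outer_scale)
    then have "cmscale (of_real r) (outer s' t') = cmscale (of_real r * (of_real (1/ norm s) * of_real (1 / norm t))) (outer s t)"
      by (simp add: cmscale_cmscale)
    also have "\<dots> = outer s t" using s0 t0 by (simp add: r_def)
    finally show ?thesis by simp
  qed
  have "outer s t + cmscale (of_real r * c) Z = cmscale (of_real r) (outer s' t' + cmscale c Z)"
    by (simp add: st cmscale_add cmscale_cmscale)
  then have "opnorm (outer s t + cmscale (of_real r * c) Z) = r * opnorm (outer s' t' + cmscale c Z)"
    using r0 by (simp add: opnorm_cmscale)
  also have "\<dots> < r" using c r0 by simp
  also have "r = opnorm (outer s t)" by (simp add: opnorm_outer r_def)
  finally show False using orth unfolding bj_orth_def by (meson not_le)
qed

lemma outer_orth_iff: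
  fixes Z :: "complex^'n^'n"
  assumes s0: "s \<noteq> 0" and t0: "t \<noteq> 0"
  shows "bj_orth (outer s t) Z \<longleftrightarrow> hip s (Z *v t) = 0"
proof
  assume "bj_orth (outer s t) Z" then show "hip s (Z *v t) = 0" using outer_not_orth[OF s0 t0] by blast
next
  assume h: "hip s (Z *v t) = 0"
  define t' where "t' = of_real (1 / norm t) *s t"
  have nt: "norm t' = 1" using unit_of[OF t0] by (simp add: t'_def)
  have Yt: "outer s t *v t' = of_real (norm t) *s s"
    using t0 by (simp add: outer_mv t'_def hip_scale_right hip_self power2_eq_square)
  show "bj_orth (outer s t) Z"
  proof (rule orth_easy[OF nt])
    show "norm (outer s t *v t') = opnorm (outer s t)" by (simp add: Yt norm_cscale opnorm_outer mult.commute)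
    show "hip (outer s t *v t') (Z *v t') = 0" unfolding Yt by (simp add: t'_def mv_cscale hip_scale_left hip_scale_right h)
  qed
qed

lemma orth_set_outer:
  assumes "s \<noteq> 0" "t \<noteq> 0"
  shows "orth_set (outer s t) = {Z. hip s (Z *v t) = 0}"
  using outer_orth_iff[OF assms] by (auto simp: orth_set_def)

lemma norming_subset:
  assumes "norm p = 1" "norm (X *v p) = opnorm X"
  shows "{Z. hip (X *v p) (Z *v p) = 0} \<subseteq> orth_set X"
  using orth_easy[OF assms] by (auto simp: orth_set_def)

lemma kernel_lemma:
  fixes w p s t :: "complex^'n"
  assumes w0: "w \<noteq> 0" and np: "norm p = 1"
  and g0: "hip s (Z1 *v t) \<noteq> 0"
  and sub: "{Z. hip w (Z *v p) = 0} \<subseteq> {Z. hip s (Z *v t) = 0}"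
  shows "{Z. hip s (Z *v t) = 0} \<subseteq> {Z. hip w (Z *v p) = (0::complex)}"
proof
  fix Z assume "Z \<in> {Z. hip s (Z *v t) = 0}"
  then have gZ: "hip s (Z *v t) = 0" by simp
  define Z0 where "Z0 = outer w p"
  have fZ0: "hip w (Z0 *v p) \<noteq> 0"
    using w0 np by (simp add: Z0_def outer_mv hip_scale_right hip_self)
  have lin: "\<And>X Y c. (X - cmscale c Y) *v v = X *v v - c *s (Y *v v)" for v :: "complex^'n"
    by (simp add: mv_mdiff mv_cmscale)
  show "Z \<in> {Z. hip w (Z *v p) = 0}"
  proof (rule ccontr)
    assume "Z \<notin> {Z. hip w (Z *v p) = 0}"
    then have fZ: "hip w (Z *v p) \<noteq> 0" by simp
    define Z' where "Z' = Z0 - cmscale (hip w (Z0 *v p) / hip w (Z *v p)) Z"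
    have "hip w (Z' *v p) = 0" using fZ by (simp add: Z'_def lin hip_diff_right hip_scale_right)
    then have "hip s (Z' *v t) = 0" using sub by blast
    then have gZ0: "hip s (Z0 *v t) = 0" using gZ by (simp add: Z'_def lin hip_diff_right hip_scale_right)
    define W where "W = Z1 - cmscale (hip w (Z1 *v p) / hip w (Z0 *v p)) Z0"
    have "hip w (W *v p) = 0" using fZ0 by (simp add: W_def lin hip_diff_right hip_scale_right)
    then have "hip s (W *v t) = 0" using sub by blast
    then have "hip s (Z1 *v t) = 0" using gZ0 by (simp add: W_def lin hip_diff_right hip_scale_right)
    then show False using g0 by simp
  qed
qed

lemma opnorm_zero[simp]: "opnorm (0::complex^'n^'n) = 0"
proof (rule antisym)
  show "opnorm (0::complex^'n^'n) \<le> 0" by (rule opnorm_le) simp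
qed (rule opnorm_nonneg)

lemma orth_set_zero: "orth_set (0::complex^'n^'n) = UNIV"
  by (auto simp: orth_set_def bj_orth_def opnorm_nonneg)

lemma smooth_outer:
  fixes s t :: "complex^'n"
  assumes s0: "s \<noteq> 0" and t0: "t \<noteq> 0"
  shows "smooth (outer s t)"
  unfolding smooth_def
proof
  assume "\<exists>Y. orth_set Y \<subset> orth_set (outer s t)"
  then obtain Y where Y: "orth_set Y \<subset> orth_set (outer s t)" by blast
  obtain p where np: "norm p = 1" and pn: "norm (Y *v p) = opnorm Y" using opnorm_attained by blast
  have H: "orth_set (outer s t) = {Z. hip s (Z *v t) = 0}" by (rule orth_set_outer[OF s0 t0])
  have g0: "hip s (outer s t *v t) \<noteq> 0"
    using s0 t0 by (simp add: outer_mv hip_scale_right hip_self)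
  have sub1: "{Z. hip (Y *v p) (Z *v p) = 0} \<subseteq> {Z. hip s (Z *v t) = 0}"
    using norming_subset[OF np pn] Y H by blast
  have w0: "Y *v p \<noteq> 0"
  proof
    assume "Y *v p = 0"
    then have "outer s t \<in> {Z. hip (Y *v p) (Z *v p) = 0}" by simp
    then show False using sub1 g0 by blast
  qed
  have "{Z. hip s (Z *v t) = 0} \<subseteq> {Z. hip (Y *v p) (Z *v p) = 0}"
    by (rule kernel_lemma[OF w0 np g0 sub1])
  then have "orth_set (outer s t) \<subseteq> orth_set Y" using norming_subset[OF np pn] H by blast
  then show False using Y by blast
qed

lemma smooth_char:
  fixes B :: "complex^'n^'n"
  assumes sm: "smooth B" and np: "norm p = 1" and pn: "norm (B *v p) = opnorm B"
  shows "B *v p \<noteq> 0" "orth_set B = {Z. hip (B *v p) (Z *v p) = 0}"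
proof -
  obtain e :: "complex^'n" where e: "norm e = 1" using vector_choose_size[of 1] by auto
  then have e0: "e \<noteq> 0" by auto
  show w0: "B *v p \<noteq> 0"
  proof
    assume "B *v p = 0"
    then have "opnorm B = 0" using pn by simp
    then have "B = 0" using opnorm_bound[of B] by (metis matrix_eq matrix_vector_mult_0 mult_zero_left norm_le_zero_iff)
    moreover have "orth_set (outer e e) \<subset> orth_set (0::complex^'n^'n)"
    proof -
      have "outer e e \<notin> orth_set (outer e e)"
        using e0 by (simp add: orth_set_outer outer_mv hip_scale_right hip_self)
      then show ?thesis by (auto simp: orth_set_zero)
    qed
    ultimately show False using sm unfolding smooth_def by blast
  qed
  have np0: "p \<noteq> 0" using np by auto
  have "{Z. hip (B *v p) (Z *v p) = 0} = orth_set (outer (B *v p) p)"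
    by (rule orth_set_outer[OF w0 np0, symmetric])
  moreover have "{Z. hip (B *v p) (Z *v p) = 0} \<subseteq> orth_set B" by (rule norming_subset[OF np pn])
  ultimately show "orth_set B = {Z. hip (B *v p) (Z *v p) = 0}"
    using sm unfolding smooth_def by blast
qed



lemma hip_sum_left: "hip (\<Sum>j\<in>J. f j) y = (\<Sum>j\<in>J. hip (f j) y)"
  by (induction J rule: infinite_finite_induct) (auto simp: hip_add_left)

lemma mv_sum: "M *v (\<Sum>j\<in>J. f j) = (\<Sum>j\<in>J. M *v (f j :: complex^'n))"
  by (induction J rule: infinite_finite_induct) (auto simp: mv_rdist)

lemma adj_diff: "adj (X - Y) = adj X - adj Y"
  by (simp add: adj_def vec_eq_iff)
lemma adj_outer: "adj (outer a b) = outer b a"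
  by (simp add: adj_def outer_def vec_eq_iff)

lemma hip_axis_right: "hip v (axis k 1) = cnj (v $ k)"
  unfolding hip_def by (subst sum.cong[OF refl, of _ _ "\<lambda>i. if i = k then cnj (v$k) else 0"]) (auto simp: axis_def)
lemma hip_axis_left: "hip (axis k 1) v = v $ k"
  unfolding hip_def by (subst sum.cong[OF refl, of _ _ "\<lambda>i. if i = k then v$k else 0"]) (auto simp: axis_def)
lemma mv_axis: "(M *v axis k 1) $ i = M $ i $ (k::'n::finite)"
  unfolding matrix_vector_mult_def by (subst vec_lambda_beta, subst sum.cong[OF refl, of _ _ "\<lambda>j. if j = k then M$i$k else 0"]) (auto simp: axis_def)

lemma hip_adj_left: "hip x (adj A *v y) = hip (A *v x) y"
  using adj_hip[of x "adj A" y] by simp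

lemma perp_span:
  fixes v x :: "complex^'n"
  assumes "\<And>t. hip t x = 0 \<Longrightarrow> hip v t = 0"
  shows "\<exists>c. v = c *s x"
proof (cases "x = 0")
  case True
  then have "hip v v = 0" using assms by simp
  then have "v = 0" by (simp add: hip_self)
  then show ?thesis by (intro exI[of _ 0]) (simp add: vec_eq_iff)
next
  case False
  define k where "k = hip x v / hip x x"
  define t where "t = v - k *s x"
  have hxx: "hip x x \<noteq> 0" using False by (simp add: hip_self)
  have "hip x t = 0" using hxx by (simp add: t_def k_def hip_diff_right hip_scale_right)
  then have ht: "hip t x = 0" by (metis hip_sym complex_cnj_zero)
  then have "hip v t = 0" by (rule assms)
  moreover have "hip t t = hip v t - cnj k * hip x t"
  proof -
    have "hip t t = hip (v - k *s x) t" by (simp only: t_def)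
    then show ?thesis by (simp only: hip_diff_left hip_scale_left)
  qed
  ultimately have "hip t t = 0" using \<open>hip x t = 0\<close> by simp
  then have "t = 0" by (simp add: hip_self)
  then show ?thesis by (auto simp: t_def)
qed

lemma eigen:
  fixes A :: "complex^'n^'n"
  assumes np: "norm p = 1" and pn: "norm (A *v p) = opnorm A"
  shows "adj A *v (A *v p) = of_real ((opnorm A)^2) *s p"
proof -
  define \<sigma> where "\<sigma> = opnorm A"
  define v where "v = adj A *v (A *v p) - of_real (\<sigma>^2) *s p"
  define \<epsilon> :: real where "\<epsilon> = 1 / (\<sigma>^2 + 1)"
  have e0: "0 < \<epsilon>" by (simp add: \<epsilon>_def add_nonneg_pos)
  have es: "\<epsilon> * \<sigma>^2 \<le> 1" by (simp add: \<epsilon>_def divide_le_eq_1 add_nonneg_pos)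
  define x where "x = p + of_real \<epsilon> *s v"
  define N where "N = (norm v)^2"
  define Q where "Q = Re (hip p v)"
  have hAA: "hip (A *v p) (A *v v) = of_real N + of_real (\<sigma>^2) * hip p v"
  proof -
    have "hip (A *v p) (A *v v) = hip (adj A *v (A *v p)) v" by (rule adj_hip)
    also have "adj A *v (A *v p) = v + of_real (\<sigma>^2) *s p" by (simp add: v_def)
    finally show ?thesis by (simp add: hip_add_left hip_scale_left hip_self N_def)
  qed
  have Ax: "(norm (A *v x))^2 = \<sigma>^2 + 2 * \<epsilon> * (N + \<sigma>^2 * Q) + \<epsilon>^2 * (norm (A *v v))^2"
    using pn by (simp add: x_def mv_rdist mv_cscale norm_add_sq hip_scale_right hAA norm_cscale
        power_mult_distrib \<sigma>_def Q_def)
  have nx: "(norm x)^2 = 1 + 2 * \<epsilon> * Q + \<epsilon>^2 * N"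
    using np by (simp add: x_def norm_add_sq hip_scale_right norm_cscale power_mult_distrib Q_def N_def)
  have "norm (A *v x) \<le> \<sigma> * norm x" using opnorm_bound[of A x] by (simp add: \<sigma>_def)
  then have "(norm (A *v x))^2 \<le> (\<sigma> * norm x)^2" by (intro power_mono) auto
  then have "\<sigma>^2 + 2 * \<epsilon> * (N + \<sigma>^2 * Q) + \<epsilon>^2 * (norm (A *v v))^2 \<le> \<sigma>^2 * (1 + 2 * \<epsilon> * Q + \<epsilon>^2 * N)"
    using Ax nx by (simp add: power_mult_distrib)
  then have "2 * (\<epsilon> * N) + \<epsilon>^2 * (norm (A *v v))^2 \<le> \<epsilon> * (\<epsilon> * \<sigma>^2 * N)"
    by (simp add: algebra_simps power2_eq_square)
  moreover have "0 \<le> \<epsilon>^2 * (norm (A *v v))^2" by simp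
  ultimately have "2 * (\<epsilon> * N) \<le> \<epsilon> * (\<epsilon> * \<sigma>^2 * N)" by linarith
  then have "\<epsilon> * (2 * N) \<le> \<epsilon> * (\<epsilon> * \<sigma>^2 * N)" by (simp add: algebra_simps)
  then have "2 * N \<le> \<epsilon> * \<sigma>^2 * N" using e0 by simp
  moreover have "\<epsilon> * \<sigma>^2 * N \<le> 1 * N" using es by (intro mult_right_mono) (auto simp: N_def)
  ultimately have "N \<le> 0" by simp
  then have "v = 0" by (simp add: N_def)
  then show ?thesis by (simp add: v_def \<sigma>_def)
qed



lemma lemmaL:
  fixes A :: "complex^'n^'n" and w x :: "'n \<Rightarrow> complex^'n" and \<sigma> :: real
  assumes np: "norm p = 1" and Ap: "A *v p = of_real \<sigma> *s q"
  and wj1: "w j1 = q" and xj1: "x j1 = p"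
  and orthj: "\<And>j. j \<noteq> j1 \<Longrightarrow> hip (w j) (A *v x j) = 0"
  and test: "\<And>s t. (\<forall>j. hip (w j) s = 0 \<or> hip t (x j) = 0) \<Longrightarrow> hip s (A *v t) = 0"
  and inj: "inj (\<lambda>s. (\<chi> j. hip (w j) s))"
  shows "A = outer (of_real \<sigma> *s q) p"
proof -
  define Mm :: "complex^'n^'n" where "Mm = (\<chi> j k. cnj (w j $ k))"
  have Mm_mv: "Mm *v s = (\<chi> j. hip (w j) s)" for s
    by (simp add: Mm_def matrix_vector_mult_def hip_def vec_eq_iff)
  have "(*v) Mm = (\<lambda>s. (\<chi> j. hip (w j) s))" by (rule ext) (simp add: Mm_mv)
  then have injM: "inj ((*v) Mm)" using inj by simp
  have "surj ((*v) Mm)" by (rule vec.linear_inj_imp_surj[OF matrix_vector_mul_linear_gen injM])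
  then have "\<forall>j. \<exists>s. Mm *v s = axis j 1" by (metis surjD)
  then obtain sj where sj: "\<And>j. Mm *v sj j = axis j 1" by metis
  have hws: "hip (w i) (sj j) = (if i = j then 1 else 0)" for i j
  proof -
    have "(Mm *v sj j) $ i = (axis j 1 :: complex^'n) $ i" by (simp add: sj)
    then show ?thesis by (simp add: Mm_mv axis_def)
  qed
  have expand: "y = (\<Sum>j\<in>UNIV. hip (w j) y *s sj j)" for y
  proof -
    have "Mm *v (\<Sum>j\<in>UNIV. hip (w j) y *s sj j) = Mm *v y"
    proof -
      have "hip (w i) (\<Sum>j\<in>UNIV. hip (w j) y *s sj j) = hip (w i) y" for i
      proof -
        have "hip (w i) (\<Sum>j\<in>UNIV. hip (w j) y *s sj j) = (\<Sum>j\<in>UNIV. hip (w j) y * hip (w i) (sj j))"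
          by (simp add: hip_sum_right hip_scale_right)
        also have "\<dots> = (\<Sum>j\<in>UNIV. if j = i then hip (w i) y else 0)"
          by (rule sum.cong) (auto simp: hws)
        finally show ?thesis by simp
      qed
      then show ?thesis by (simp add: Mm_mv vec_eq_iff)
    qed
    then show ?thesis using injM by (metis injD)
  qed
  have adjs: "\<exists>c. adj A *v sj j = c *s x j" for j
  proof (rule perp_span)
    fix t assume ht: "hip t (x j) = 0"
    have "\<forall>i. hip (w i) (sj j) = 0 \<or> hip t (x i) = 0" using ht hws by auto
    then have "hip (sj j) (A *v t) = 0" by (rule test)
    then show "hip (adj A *v sj j) t = 0" by (simp add: adj_hip)
  qed
  then obtain c where c: "\<And>j. adj A *v sj j = c j *s x j" by metis
  define A0 where "A0 = A - outer (of_real \<sigma> *s q) p"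
  have adjA0: "adj A0 *v y = adj A *v y - (of_real \<sigma> * hip q y) *s p" for y
    by (simp add: A0_def adj_diff adj_outer mv_mdiff outer_mv hip_scale_left)
  have cj1: "c j1 = of_real \<sigma>"
  proof -
    have "hip p (adj A *v sj j1) = hip (A *v p) (sj j1)" by (rule hip_adj_left)
    also have "\<dots> = of_real \<sigma>" using hws[of j1 j1] wj1 by (simp add: Ap hip_scale_left)
    finally show ?thesis using np by (simp add: c xj1 hip_scale_right hip_self)
  qed
  define D where "D j = (if j = j1 then 0 else c j)" for j
  have A0s: "adj A0 *v sj j = D j *s x j" for j
  proof (cases "j = j1")
    case True
    then show ?thesis using hws[of j1 j1] wj1 by (simp add: adjA0 c D_def cj1 xj1)
  next
    case False
    then show ?thesis using hws[of j1 j] wj1 by (simp add: adjA0 c D_def)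
  qed
  have A0y: "adj A0 *v y = (\<Sum>j\<in>UNIV. (hip (w j) y * D j) *s x j)" for y
  proof -
    have "adj A0 *v y = adj A0 *v (\<Sum>j\<in>UNIV. hip (w j) y *s sj j)" using expand[of y] by simp
    also have "\<dots> = (\<Sum>j\<in>UNIV. hip (w j) y *s (D j *s x j))" by (simp add: mv_sum mv_cscale A0s)
    also have "\<dots> = (\<Sum>j\<in>UNIV. (hip (w j) y * D j) *s x j)" by (simp add: vector_smult_assoc)
    finally show ?thesis .
  qed
  have A0p: "A0 *v p = 0" using np by (simp add: A0_def mv_mdiff outer_mv Ap hip_self)
  have wA0x: "D j * hip (w j) (A0 *v x j) = - (of_real \<sigma> * (hip (w j) q * D j * hip p (x j)))" for j
  proof (cases "j = j1")
    case True then show ?thesis by (simp add: D_def)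
  next
    case False
    then show ?thesis using orthj[OF False]
      by (simp add: A0_def mv_mdiff outer_mv hip_diff_right hip_scale_right D_def)
  qed
  have pt: "hip (adj A0 *v axis k 1) (adj A0 *v axis k 1)
      = (\<Sum>j\<in>UNIV. cnj (D j) * ((w j $ k) * cnj ((A0 *v x j) $ k)))" for k
  proof -
    have "hip (adj A0 *v axis k 1) (adj A0 *v axis k 1)
        = hip (\<Sum>j\<in>UNIV. (hip (w j) (axis k 1) * D j) *s x j) (adj A0 *v axis k 1)"
      by (rule arg_cong[where f="\<lambda>z. hip z (adj A0 *v axis k 1)"], rule A0y)
    also have "\<dots> = (\<Sum>j\<in>UNIV. cnj (hip (w j) (axis k 1) * D j) * hip (x j) (adj A0 *v axis k 1))"
      by (simp add: hip_sum_left hip_scale_left)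
    also have "\<dots> = (\<Sum>j\<in>UNIV. cnj (D j) * ((w j $ k) * cnj ((A0 *v x j) $ k)))"
      by (simp add: hip_axis_right hip_adj_left mult_ac)
    finally show ?thesis .
  qed
  have "(\<Sum>k\<in>UNIV. hip (adj A0 *v axis k 1) (adj A0 *v axis k 1))
      = (\<Sum>k\<in>UNIV. \<Sum>j\<in>UNIV. cnj (D j) * ((w j $ k) * cnj ((A0 *v x j) $ k)))"
    by (simp add: pt)
  also have "\<dots> = (\<Sum>j\<in>UNIV. \<Sum>k\<in>UNIV. cnj (D j) * ((w j $ k) * cnj ((A0 *v x j) $ k)))"
    by (rule sum.swap)
  also have "\<dots> = (\<Sum>j\<in>UNIV. cnj (D j) * hip (A0 *v x j) (w j))"
    by (simp add: hip_def sum_distrib_left mult_ac)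
  also have "\<dots> = (\<Sum>j\<in>UNIV. cnj (D j * hip (w j) (A0 *v x j)))"
    by (simp add: hip_sym[of "A0 *v x _"])
  also have "\<dots> = cnj (- (of_real \<sigma> * (\<Sum>j\<in>UNIV. (hip (w j) q * D j) * hip p (x j))))"
    by (simp add: wA0x sum_distrib_left sum_negf)
  also have "(\<Sum>j\<in>UNIV. (hip (w j) q * D j) * hip p (x j)) = hip p (adj A0 *v q)"
    by (simp add: A0y hip_sum_right hip_scale_right)
  also have "hip p (adj A0 *v q) = 0" by (simp add: hip_adj_left A0p)
  finally have "(\<Sum>k\<in>UNIV. hip (adj A0 *v axis k 1) (adj A0 *v axis k 1)) = 0" by simp
  then have "(\<Sum>k\<in>UNIV. of_real ((norm (adj A0 *v axis k 1))^2) :: complex) = 0"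
    by (simp add: hip_self)
  then have "(\<Sum>k\<in>UNIV. (norm (adj A0 *v axis k 1))^2) = 0"
    by (metis of_real_eq_0_iff of_real_sum)
  then have "\<forall>k\<in>UNIV. (norm (adj A0 *v axis k 1))^2 = 0"
    by (subst sum_nonneg_eq_0_iff[symmetric]) auto
  then have z: "adj A0 *v axis k 1 = 0" for k by simp
  have "A0 = 0"
  proof (subst vec_eq_iff, intro allI, subst vec_eq_iff, intro allI)
    fix i k
    have "(adj A0 *v axis i 1) $ k = 0" using z by simp
    then show "A0 $ i $ k = 0 $ i $ k" by (simp add: mv_axis adj_def)
  qed
  then show ?thesis by (simp add: A0_def)
qed



lemma norm3:
  fixes u v w :: "complex^'n"
  assumes "hip u v = 0" "hip u w = 0" "hip v w = 0"
  shows "(norm (u + v + w))^2 = (norm u)^2 + (norm v)^2 + (norm w)^2"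
  using assms by (simp add: norm_add_sq hip_add_left)

lemma cplx_ineq: "(cmod (b - a/2))^2 + (cmod (a + b))^2 \<le> 9/4 * ((cmod a)^2 + (cmod b)^2)"
proof -
  have "(cmod (b - a/2))^2 + (cmod (a+b))^2 + (cmod (a - b/2))^2 = 9/4 * ((cmod a)^2 + (cmod b)^2)"
    by (simp only: cmod_power2) (simp add: power2_eq_square algebra_simps)
  then show ?thesis by (smt (verit) zero_le_power2)
qed

lemma aux94: fixes N P Q Z X :: real
  assumes "N \<le> P + Z / 4" "P \<le> 9/4 * Q" "X = Q + Z" "0 \<le> Z"
  shows "N \<le> 9/4 * X"
  using assms by linarith

lemma case3:
  fixes A :: "complex^'n^'n" and \<sigma> :: real
  assumes np: "norm p = 1" and nq: "norm q = 1" and s0n: "norm s0 = 1" and t0n: "norm t0 = 1"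
  and Ap: "A *v p = of_real \<sigma> *s q" and Aq: "adj A *v q = of_real \<sigma> *s p"
  and sig: "\<sigma> = opnorm A" and sig0: "0 < \<sigma>"
  and s0q: "hip q s0 = 0" and t0p: "hip p t0 = 0"
  and As0: "adj A *v s0 = 0" and At0: "A *v t0 = 0"
  shows "\<not> bj_orth (outer s0 p + outer q t0 + outer s0 t0) A"
proof
  define Y where "Y = outer s0 p + outer q t0 + outer s0 t0"
  assume orth: "bj_orth (outer s0 p + outer q t0 + outer s0 t0) A"
  define c :: complex where "c = - of_real (1 / (2 * \<sigma>))"
  have t0p': "hip t0 p = 0" using t0p by (metis hip_sym complex_cnj_zero)
  have s0q': "hip s0 q = 0" using s0q by (metis hip_sym complex_cnj_zero)
  have hpp: "hip p p = 1" using np by (simp add: hip_self)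
  have ht0: "hip t0 t0 = 1" using t0n by (simp add: hip_self)
  have Yx: "Y *v x = hip p x *s s0 + hip t0 x *s q + hip t0 x *s s0" for x
    by (simp add: Y_def mv_add outer_mv)
  have upper: "opnorm (Y + cmscale c A) \<le> 3/2"
  proof (rule opnorm_le)
    fix x :: "complex^'n"
    define a where "a = hip p x"
    define b where "b = hip t0 x"
    define z where "z = x - a *s p - b *s t0"
    have pz: "hip p z = 0" by (simp add: z_def hip_diff_right hip_scale_right hpp t0p a_def)
    have tz: "hip t0 z = 0" by (simp add: z_def hip_diff_right hip_scale_right ht0 t0p' b_def)
    have xz: "x = a *s p + b *s t0 + z" by (simp add: z_def)
    have nx: "(norm x)^2 = (cmod a)^2 + (cmod b)^2 + (norm z)^2"
      by (subst xz, subst norm3) (simp_all add: hip_scale_left hip_scale_right t0p pz tz norm_cscale np t0n)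
    have Ax: "A *v x = (of_real \<sigma> * a) *s q + A *v z"
      by (subst xz) (simp add: mv_rdist mv_cscale Ap At0 vector_smult_assoc mult.commute)
    have qAz: "hip q (A *v z) = 0" by (simp add: adj_hip Aq hip_scale_left pz)
    have sAz: "hip s0 (A *v z) = 0" by (simp add: adj_hip As0)
    define u1 where "u1 = (b - a/2) *s q"
    define u2 where "u2 = (a + b) *s s0"
    define u3 where "u3 = c *s (A *v z)"
    have "(Y + cmscale c A) *v x = u1 + u2 + u3"
      using sig0 by (simp add: u1_def u2_def u3_def mv_add mv_cmscale Yx Ax a_def b_def c_def vec_eq_iff algebra_simps)
    moreover have "hip u1 u2 = 0" unfolding u1_def u2_def by (simp only: hip_scale_left hip_scale_right s0q mult_zero_right)
    moreover have "hip u1 u3 = 0" unfolding u1_def u3_def by (simp only: hip_scale_left hip_scale_right qAz mult_zero_right)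
    moreover have "hip u2 u3 = 0" unfolding u2_def u3_def by (simp only: hip_scale_left hip_scale_right sAz mult_zero_right)
    ultimately have "(norm ((Y + cmscale c A) *v x))^2 = (norm u1)^2 + (norm u2)^2 + (norm u3)^2"
      by (simp add: norm3)
    also have "\<dots> = (cmod (b - a/2))^2 + (cmod (a+b))^2 + (cmod c * norm (A *v z))^2"
      unfolding u1_def u2_def u3_def by (simp only: norm_cscale nq s0n mult_1_right)
    also have "(cmod c * norm (A *v z))^2 \<le> (norm z)^2 / 4"
    proof -
      have "norm (A *v z) \<le> \<sigma> * norm z" using opnorm_bound[of A z] sig by simp
      then have "cmod c * norm (A *v z) \<le> cmod c * (\<sigma> * norm z)" by (intro mult_left_mono) auto
      also have "cmod c * (\<sigma> * norm z) = norm z / 2" using sig0 by (simp add: c_def norm_divide norm_mult)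
      finally have "cmod c * norm (A *v z) \<le> norm z / 2" .
      then have "(cmod c * norm (A *v z))^2 \<le> (norm z / 2)^2" by (intro power_mono) auto
      then show ?thesis by (simp add: power_divide)
    qed
    finally have "(norm ((Y + cmscale c A) *v x))^2 \<le> (cmod (b - a/2))^2 + (cmod (a+b))^2 + (norm z)^2 / 4"
      by simp
    then have "(norm ((Y + cmscale c A) *v x))^2 \<le> 9/4 * (norm x)^2"
      by (rule aux94[OF _ cplx_ineq[of b a] _ zero_le_power2[of "norm z"]]) (use nx in auto)
    also have "9/4 * (norm x)^2 = (3/2 * norm x)^2" by (simp add: power2_eq_square)
    finally have "(norm ((Y + cmscale c A) *v x))^2 \<le> (3/2 * norm x)^2" .
    then show "norm ((Y + cmscale c A) *v x) \<le> 3/2 * norm x"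
      by (rule power2_le_imp_le) simp
  qed
  have lower: "3/2 < opnorm Y"
  proof -
    define v where "v = p + of_real 2 *s t0"
    have nv: "(norm v)^2 = 5"
      by (simp add: v_def norm_add_sq hip_scale_right t0p norm_cscale np t0n)
    have Yv: "Y *v v = of_real 3 *s s0 + of_real 2 *s q"
      by (simp add: Yx v_def hip_add_right hip_scale_right hpp t0p t0p' ht0 vec_eq_iff algebra_simps)
    have nYv: "(norm (Y *v v))^2 = 13"
      by (simp add: Yv norm_add_sq hip_scale_left hip_scale_right s0q' norm_cscale s0n nq)
    have "norm (Y *v v) \<le> opnorm Y * norm v" by (rule opnorm_bound)
    then have "(norm (Y *v v))^2 \<le> (opnorm Y * norm v)^2" by (intro power_mono) auto
    then have "13 \<le> (opnorm Y)^2 * 5" using nYv nv by (simp add: power_mult_distrib)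
    then have "(3/2)^2 < (opnorm Y)^2" by (simp add: power2_eq_square)
    then show ?thesis using opnorm_nonneg[of Y] by (smt (verit) power_mono)
  qed
  have "opnorm Y \<le> opnorm (Y + cmscale c A)" using orth unfolding bj_orth_def Y_def by blast
  then show False using upper lower by simp
qed



lemma rank_outer:
  fixes u v :: "complex^'n"
  assumes u0: "u \<noteq> 0" and v0: "v \<noteq> 0"
  shows "rank (outer u v) = 1"
proof -
  define cv :: "complex^'n" where "cv = (\<chi> k. cnj (v$k))"
  have rowi: "row i (outer u v) = (u$i) *s cv" for i
    by (simp add: row_def outer_def cv_def vec_eq_iff)
  have sub: "rows (outer u v) \<subseteq> vec.span {cv}"
    using vec.span_singleton[of cv] by (auto simp: rows_def rowi)
  have le: "vec.dim (rows (outer u v)) \<le> card {cv}"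
    by (rule vec.dim_le_card[OF sub]) simp
  obtain i where ui: "u$i \<noteq> 0" using u0 by (auto simp: vec_eq_iff)
  obtain k where vk: "v$k \<noteq> 0" using v0 by (auto simp: vec_eq_iff)
  have "row i (outer u v) \<noteq> 0"
  proof
    assume "row i (outer u v) = 0"
    then have "(row i (outer u v))$k = 0" by simp
    then show False using ui vk by (simp add: rowi cv_def)
  qed
  then have "\<not> rows (outer u v) \<subseteq> {0}" by (auto simp: rows_def)
  then have nz: "vec.dim (rows (outer u v)) \<noteq> 0" using vec.dim_eq_0 by blast
  have le1: "vec.dim (rows (outer u v)) \<le> 1" using le by simp
  show ?thesis unfolding row_rank_def_gen using le1 nz by linarith
qed

lemma rank1_outer:
  fixes A :: "complex^'n^'n"
  assumes r: "rank A = 1"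
  shows "\<exists>u v. u \<noteq> 0 \<and> v \<noteq> 0 \<and> A = outer u v"
proof -
  have d: "vec.dim (rows A) = 1" using r by (simp add: row_rank_def_gen)
  obtain B where B: "B \<subseteq> rows A" "vec.independent B" "rows A \<subseteq> vec.span B" "card B = vec.dim (rows A)"
    by (rule vec.basis_exists)
  have "card B = 1" using B(4) d by simp
  then obtain b where Bb: "B = {b}" by (rule card_1_singletonE)
  have b0: "b \<noteq> 0" using B(2) Bb vec.dependent_zero by blast
  have "\<forall>i. \<exists>c. A$i = c *s b"
  proof
    fix i
    have "row i A \<in> rows A" by (auto simp: rows_def)
    then have "row i A \<in> range (\<lambda>k. k *s b)" using B(3) Bb vec.span_singleton by blast
    moreover have "row i A = A$i" by (simp add: row_def vec_eq_iff)
    ultimately show "\<exists>c. A$i = c *s b" by auto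
  qed
  then obtain c where c: "\<And>i. A$i = c i *s b" by metis
  define u :: "complex^'n" where "u = (\<chi> i. c i)"
  define v :: "complex^'n" where "v = (\<chi> k. cnj (b$k))"
  have A: "A = outer u v" by (simp add: outer_def u_def v_def vec_eq_iff c)
  have v0: "v \<noteq> 0" using b0 by (auto simp: v_def vec_eq_iff)
  have u0: "u \<noteq> 0"
  proof
    assume "u = 0"
    then have "A = 0" by (simp add: A outer_def vec_eq_iff)
    then have "rows A \<subseteq> {0}" by (auto simp: rows_def row_def vec_eq_iff)
    then have "vec.dim (rows A) = 0" using vec.dim_eq_0 by blast
    then show False using d by simp
  qed
  show ?thesis using A u0 v0 by blast
qed



lemma orth_of_perp:
  fixes Y :: "complex^'n^'n"
  assumes "\<And>x. hip u (Y *v x) = 0"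
  shows "bj_orth Y (outer u v)"
  unfolding bj_orth_def
proof
  fix c
  show "opnorm Y \<le> opnorm (Y + cmscale c (outer u v))"
  proof (rule opnorm_le)
    fix x
    have e: "(Y + cmscale c (outer u v)) *v x = Y *v x + (c * hip v x) *s u"
      by (simp add: mv_add mv_cmscale outer_mv vector_smult_assoc)
    have h: "hip (Y *v x) ((c * hip v x) *s u) = 0"
      using assms[of x] by (simp add: hip_scale_right hip_sym[of "Y *v x" u])
    have "(norm (Y *v x))^2 \<le> (norm ((Y + cmscale c (outer u v)) *v x))^2"
      by (simp add: e norm_add_sq h)
    then have "norm (Y *v x) \<le> norm ((Y + cmscale c (outer u v)) *v x)"
      by (rule power2_le_imp_le) simp
    also have "\<dots> \<le> opnorm (Y + cmscale c (outer u v)) * norm x" by (rule opnorm_bound)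
    finally show "norm (Y *v x) \<le> opnorm (Y + cmscale c (outer u v)) * norm x" .
  qed
qed

lemma forward:
  fixes u v :: "complex^'n"
  assumes u0: "u \<noteq> 0" and v0: "v \<noteq> 0" and N: "CARD('n) \<ge> 2"
  shows "\<exists>B :: nat \<Rightarrow> complex^'n^'n.
       (\<forall>i\<in>{2..CARD('n)}. smooth (B i)) \<and>
       outer u v \<in> (\<Inter>i\<in>{2..CARD('n)}. orth_set (B i)) \<and>
       left_symmetric_rel (\<Inter>i\<in>{2..CARD('n)}. orth_set (B i)) (outer u v)"
proof -
  obtain k where vk: "v$k \<noteq> 0" using v0 by (auto simp: vec_eq_iff)
  define xv :: "'n \<Rightarrow> complex^'n" where "xv j = axis j 1 - (cnj (v$j) / cnj (v$k)) *s axis k 1" for j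
  have hvx: "hip v (xv j) = 0" for j
    using vk by (simp add: xv_def hip_diff_right hip_scale_right hip_axis_right)
  have xv0: "xv j \<noteq> 0" if "j \<noteq> k" for j
  proof
    assume "xv j = 0"
    then have "(xv j)$j = 0" by simp
    then show False using that by (simp add: xv_def axis_def)
  qed
  have cc: "card {2..CARD('n)} = card (UNIV - {k})" using N by (simp add: card_Diff_singleton)
  have fin: "finite (UNIV - {k} :: 'n set)" by simp
  obtain g where g: "bij_betw g {2..CARD('n)} (UNIV - {k})"
    using finite_same_card_bij[OF finite_atLeastAtMost fin cc] by blast
  define B where "B i = outer u (xv (g i))" for i
  have gk: "g i \<noteq> k" if "i \<in> {2..CARD('n)}" for i using g that by (auto simp: bij_betw_def)
  have OB: "orth_set (B i) = {Z. hip u (Z *v xv (g i)) = 0}" if "i \<in> {2..CARD('n)}" for i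
    unfolding B_def by (rule orth_set_outer[OF u0 xv0[OF gk[OF that]]])
  have sm: "\<forall>i\<in>{2..CARD('n)}. smooth (B i)"
    using smooth_outer[OF u0 xv0] gk by (auto simp: B_def)
  have AS: "outer u v \<in> (\<Inter>i\<in>{2..CARD('n)}. orth_set (B i))"
    using OB by (auto simp: outer_mv hip_scale_right hvx)
  have LS: "\<forall>Y\<in>(\<Inter>i\<in>{2..CARD('n)}. orth_set (B i)). bj_orth (outer u v) Y \<longrightarrow> bj_orth Y (outer u v)"
  proof (intro ballI impI)
    fix Y assume YS: "Y \<in> (\<Inter>i\<in>{2..CARD('n)}. orth_set (B i))" and AY: "bj_orth (outer u v) Y"
    define r where "r = adj Y *v u"
    have hr: "hip u (Y *v x) = hip r x" for x by (simp add: r_def adj_hip)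
    have rv: "hip r v = 0" using AY outer_orth_iff[OF u0 v0] hr by simp
    have rx: "hip r (xv j) = 0" if jk: "j \<noteq> k" for j
    proof -
      have "j \<in> g ` {2..CARD('n)}" using g jk by (auto simp: bij_betw_def)
      then obtain i where i: "i \<in> {2..CARD('n)}" "g i = j" by blast
      then have "Y \<in> orth_set (B i)" using YS by blast
      then show ?thesis using OB[OF i(1)] i(2) hr by simp
    qed
    define l where "l = cnj (r$k) / cnj (v$k)"
    have rj: "cnj (r$j) = l * cnj (v$j)" for j
    proof (cases "j = k")
      case True then show ?thesis using vk by (simp add: l_def)
    next
      case False
      then have "hip r (xv j) = 0" by (rule rx)
      then show ?thesis using vk by (simp add: xv_def hip_diff_right hip_scale_right hip_axis_right l_def field_simps)
    qed
    have "hip r v = l * hip v v"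
      unfolding hip_def by (simp add: rj sum_distrib_left mult_ac)
    then have "l = 0" using rv v0 by (simp add: hip_self)
    then have "hip r x = 0" for x by (simp add: hip_def rj)
    then have "\<forall>x. hip u (Y *v x) = 0" by (simp add: hr)
    then show "bj_orth Y (outer u v)" by (intro orth_of_perp) simp
  qed
  show ?thesis using sm AS LS by (auto simp: left_symmetric_rel_def)
qed



lemma noninj_kernel:
  fixes w :: "'n \<Rightarrow> complex^'n"
  assumes "\<not> inj (\<lambda>s. (\<chi> j. hip (w j) s))"
  shows "\<exists>s. norm s = 1 \<and> (\<forall>j. hip (w j) s = 0)"
proof -
  obtain a b where ab: "a \<noteq> b" "(\<chi> j. hip (w j) a) = (\<chi> j. hip (w j) b)"
    using assms unfolding inj_def by blast
  define d where "d = a - b"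
  have d0: "d \<noteq> 0" using ab by (simp add: d_def)
  have hd: "hip (w j) d = 0" for j
  proof -
    have "hip (w j) a = hip (w j) b" using ab(2) by (simp add: vec_eq_iff)
    then show ?thesis by (simp add: d_def hip_diff_right)
  qed
  show ?thesis
    by (intro exI[of _ "of_real (1 / norm d) *s d"]) (simp add: norm_cscale norm_divide d0 hip_scale_right hd)
qed

lemma opnorm_pos: "A \<noteq> 0 \<Longrightarrow> 0 < opnorm (A::complex^'n^'n)"
proof -
  assume A0: "A \<noteq> 0"
  show ?thesis
  proof (rule ccontr)
    assume "\<not> 0 < opnorm A"
    then have "opnorm A = 0" using opnorm_nonneg[of A] by simp
    then have "\<forall>x. A *v x = 0" using opnorm_bound[of A] by (metis mult_zero_left norm_le_zero_iff)
    then have "A = 0" by (simp add: matrix_eq)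
    then show False using A0 by simp
  qed
qed

lemma backward:
  fixes A :: "complex^'n^'n" and B :: "nat \<Rightarrow> complex^'n^'n"
  assumes A0: "A \<noteq> 0" and N: "CARD('n) \<ge> 2"
  and sm: "\<forall>i\<in>{2..CARD('n)}. smooth (B i)"
  and AS: "A \<in> (\<Inter>i\<in>{2..CARD('n)}. orth_set (B i))"
  and LS: "left_symmetric_rel (\<Inter>i\<in>{2..CARD('n)}. orth_set (B i)) A"
  shows "\<exists>u v. u \<noteq> 0 \<and> v \<noteq> 0 \<and> A = outer u v"
proof -
  let ?S = "\<Inter>i\<in>{2..CARD('n)}. orth_set (B i)"
  obtain p where np: "norm p = 1" and pn: "norm (A *v p) = opnorm A" using opnorm_attained by blast
  define \<sigma> where "\<sigma> = opnorm A"
  have s0: "0 < \<sigma>" using opnorm_pos[OF A0] by (simp add: \<sigma>_def)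
  define q where "q = of_real (1 / \<sigma>) *s (A *v p)"
  have Ap: "A *v p = of_real \<sigma> *s q" using s0 by (simp add: q_def vector_smult_assoc)
  have nq: "norm q = 1" using s0 pn by (simp add: q_def norm_cscale norm_divide \<sigma>_def)
  have Aq: "adj A *v q = of_real \<sigma> *s p"
    using eigen[OF np pn] s0 by (simp add: q_def mv_cscale vector_smult_assoc \<sigma>_def power2_eq_square)
  have p0: "p \<noteq> 0" using np by auto
  have q0: "q \<noteq> 0" using nq by auto
  have cc: "card (UNIV :: 'n set) = card {1..CARD('n)}" by simp
  obtain h where h: "bij_betw h (UNIV :: 'n set) {1..CARD('n)}"
    using finite_same_card_bij[OF finite finite_atLeastAtMost cc] by blast
  have "1 \<in> h ` UNIV" using h N by (auto simp: bij_betw_def)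
  then obtain j1 where hj1: "h j1 = 1" by (metis imageE)
  have hj: "h j \<in> {2..CARD('n)}" if "j \<noteq> j1" for j
  proof -
    have "h j \<in> {1..CARD('n)}" using h by (auto simp: bij_betw_def)
    moreover have "h j \<noteq> 1" using that hj1 h by (metis bij_betw_imp_inj_on inj_on_def iso_tuple_UNIV_I)
    ultimately show ?thesis by auto
  qed
  have hsurj: "\<exists>j. j \<noteq> j1 \<and> h j = i" if "i \<in> {2..CARD('n)}" for i
  proof -
    have "i \<in> h ` UNIV" using h that by (auto simp: bij_betw_def)
    then obtain j where "h j = i" by blast
    moreover have "j \<noteq> j1" using hj1 that calculation by auto
    ultimately show ?thesis by blast
  qed
  define pj where "pj j = (SOME x. norm x = 1 \<and> norm (B (h j) *v x) = opnorm (B (h j)))" for j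
  have pj: "norm (pj j) = 1 \<and> norm (B (h j) *v pj j) = opnorm (B (h j))" for j
    unfolding pj_def by (rule someI_ex) (rule opnorm_attained)
  define x where "x j = (if j = j1 then p else pj j)" for j
  define w where "w j = (if j = j1 then q else B (h j) *v pj j)" for j
  have OB: "orth_set (B (h j)) = {Z. hip (w j) (Z *v x j) = 0}" if "j \<noteq> j1" for j
  proof -
    have "smooth (B (h j))" using sm hj[OF that] by blast
    then show ?thesis using smooth_char(2)[of "B (h j)" "pj j"] pj[of j] that by (simp add: w_def x_def)
  qed
  have Sdesc: "Y \<in> ?S \<longleftrightarrow> (\<forall>j. j \<noteq> j1 \<longrightarrow> hip (w j) (Y *v x j) = 0)" for Y
  proof
    assume "Y \<in> ?S"
    then show "\<forall>j. j \<noteq> j1 \<longrightarrow> hip (w j) (Y *v x j) = 0" using OB hj by blast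
  next
    assume H: "\<forall>j. j \<noteq> j1 \<longrightarrow> hip (w j) (Y *v x j) = 0"
    show "Y \<in> ?S"
    proof
      fix i assume "i \<in> {2..CARD('n)}"
      then obtain j where "j \<noteq> j1" "h j = i" using hsurj by blast
      then show "Y \<in> orth_set (B i)" using OB H by auto
    qed
  qed
  have wj1: "w j1 = q" and xj1: "x j1 = p" by (simp_all add: w_def x_def)
  have orthj: "hip (w j) (A *v x j) = 0" if "j \<noteq> j1" for j using AS Sdesc that by blast
  have AYorth: "bj_orth A Y" if "hip q (Y *v p) = 0" for Y
    by (rule orth_easy[OF np pn]) (simp add: Ap hip_scale_left that)
  have LS': "bj_orth Y A" if "Y \<in> ?S" "bj_orth A Y" for Y
    using LS that by (auto simp: left_symmetric_rel_def)
  have test: "hip s (A *v t) = 0" if H: "\<forall>j. hip (w j) s = 0 \<or> hip t (x j) = 0" for s t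
  proof (cases "s = 0 \<or> t = 0")
    case True then show ?thesis by auto
  next
    case False
    then have ss: "s \<noteq> 0" and tt: "t \<noteq> 0" by auto
    have "outer s t \<in> ?S" unfolding Sdesc using H by (auto simp: outer_mv hip_scale_right)
    moreover have "bj_orth A (outer s t)"
      using H[rule_format, of j1] by (intro AYorth) (auto simp: outer_mv hip_scale_right wj1 xj1)
    ultimately have "bj_orth (outer s t) A" by (rule LS')
    then show ?thesis using outer_orth_iff[OF ss tt] by simp
  qed
  show ?thesis
  proof (cases "inj (\<lambda>s. (\<chi> j. hip (w j) s))")
    case True
    have "A = outer (of_real \<sigma> *s q) p" by (rule lemmaL[OF np Ap wj1 xj1 orthj test True])
    moreover have "of_real \<sigma> *s q \<noteq> 0" using s0 q0 by (simp add: vec_eq_iff)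
    ultimately show ?thesis using p0 by blast
  next
    case ninjw: False
    show ?thesis
    proof (cases "inj (\<lambda>s. (\<chi> j. hip (x j) s))")
      case True
      have orthj': "hip (x j) (adj A *v w j) = 0" if "j \<noteq> j1" for j
        using orthj[OF that] by (simp add: hip_adj_left hip_sym[of "A *v x j"])
      have test': "hip s (adj A *v t) = 0" if H: "\<forall>j. hip (x j) s = 0 \<or> hip t (w j) = 0" for s t
      proof -
        have "\<forall>j. hip (w j) t = 0 \<or> hip s (x j) = 0"
          using H by (metis hip_sym complex_cnj_zero)
        then have "hip t (A *v s) = 0" by (rule test)
        then show ?thesis by (simp add: hip_adj_left hip_sym[of "A *v s"])
      qed
      have "adj A = outer (of_real \<sigma> *s p) q"
        by (rule lemmaL[OF nq Aq xj1 wj1 orthj' test' True])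
      then have "A = outer q (of_real \<sigma> *s p)" by (metis adj_adj adj_outer)
      moreover have "of_real \<sigma> *s p \<noteq> 0" using s0 p0 by (simp add: vec_eq_iff)
      ultimately show ?thesis using q0 by blast
    next
      case ninjx: False
      obtain s0 where s0n: "norm s0 = 1" and s0w: "\<forall>j. hip (w j) s0 = 0"
        using noninj_kernel[OF ninjw] by blast
      obtain t0 where t0n: "norm t0 = 1" and t0x: "\<forall>j. hip (x j) t0 = 0"
        using noninj_kernel[OF ninjx] by blast
      have t0x': "hip t0 (x j) = 0" for j using t0x by (metis hip_sym complex_cnj_zero)
      have As0: "adj A *v s0 = 0"
      proof -
        have "hip s0 (A *v (adj A *v s0)) = 0" using s0w by (intro test) blast
        then have "hip (adj A *v s0) (adj A *v s0) = 0" by (simp add: adj_hip)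
        then show ?thesis by (simp add: hip_self)
      qed
      have At0: "A *v t0 = 0"
      proof -
        have "hip (A *v t0) (A *v t0) = 0" using t0x' by (intro test) blast
        then show ?thesis by (simp add: hip_self)
      qed
      have s0q: "hip q s0 = 0" using s0w wj1 by metis
      have t0p: "hip p t0 = 0" using t0x xj1 by metis
      have t0p': "hip t0 p = 0" using t0x' xj1 by metis
      define Y where "Y = outer s0 p + outer q t0 + outer s0 t0"
      have "Y \<in> ?S" unfolding Sdesc
        by (simp add: Y_def mv_add outer_mv hip_add_right hip_scale_right s0w t0x')
      moreover have "bj_orth A Y"
        by (rule AYorth) (simp add: Y_def mv_add outer_mv hip_add_right hip_scale_right s0q t0p')
      ultimately have "bj_orth Y A" by (rule LS')
      moreover have "\<not> bj_orth Y A"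
        unfolding Y_def by (rule case3[OF np nq s0n t0n Ap Aq \<sigma>_def s0 s0q t0p As0 At0])
      ultimately show ?thesis by blast
    qed
  qed
qed

theorem lemma4p2:
  fixes A :: "complex^'n^'n"
  assumes "CARD('n) \<ge> 2" and "A \<noteq> 0"
  shows "rank A = 1 \<longleftrightarrow>
    (\<exists>B :: nat \<Rightarrow> complex^'n^'n.
       (\<forall>i\<in>{2..CARD('n)}. smooth (B i)) \<and>
       A \<in> (\<Inter>i\<in>{2..CARD('n)}. orth_set (B i)) \<and>
       left_symmetric_rel (\<Inter>i\<in>{2..CARD('n)}. orth_set (B i)) A)"
proof
  assume "rank A = 1"
  then obtain u v where uv: "u \<noteq> 0" "v \<noteq> 0" "A = outer u v" using rank1_outer by blast
  show "\<exists>B :: nat \<Rightarrow> complex^'n^'n.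
       (\<forall>i\<in>{2..CARD('n)}. smooth (B i)) \<and>
       A \<in> (\<Inter>i\<in>{2..CARD('n)}. orth_set (B i)) \<and>
       left_symmetric_rel (\<Inter>i\<in>{2..CARD('n)}. orth_set (B i)) A"
    using forward[OF uv(1,2) assms(1)] uv(3) by simp
next
  assume "\<exists>B :: nat \<Rightarrow> complex^'n^'n.
       (\<forall>i\<in>{2..CARD('n)}. smooth (B i)) \<and>
       A \<in> (\<Inter>i\<in>{2..CARD('n)}. orth_set (B i)) \<and>
       left_symmetric_rel (\<Inter>i\<in>{2..CARD('n)}. orth_set (B i)) A"
  then obtain B :: "nat \<Rightarrow> complex^'n^'n" where
    "\<forall>i\<in>{2..CARD('n)}. smooth (B i)" "A \<in> (\<Inter>i\<in>{2..CARD('n)}. orth_set (B i))"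
    "left_symmetric_rel (\<Inter>i\<in>{2..CARD('n)}. orth_set (B i)) A" by blast
  then obtain u v where "u \<noteq> 0" "v \<noteq> 0" "A = outer u v"
    using backward[OF assms(2) assms(1)] by blast
  then show "rank A = 1" using rank_outer by blast
qed

end
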